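(* Let $\alpha>-1$, let $\phi(z)=\lambda z$ with $\lambda\ne0$ (so $0<|\lambda|\le1$), and let $\psi(z)=\sum_{k=1}^\infty\hat\psi_kz^k$ be analytic on $\mathbb{D}$ (so $\psi(0)=0$), with $C_{\psi,\phi}$ bounded on $L^2_a(dA_\alpha)$. Then for every integer $m\ge2$, $W(C_{\psi,\phi})$ contains the closed disc centred at the origin with radius $\dfrac12\sqrt{\dfrac{m!\,\Gamma(\alpha+3)}{\Gamma(m+\alpha+2)}}\,|\lambda\hat\psi_{m-1}|$.
   Context: $\mathbb{D}$ is the open unit disc. $L^2_a(dA_\alpha)$ is the weighted Bergman space of analytic $f$ on $\mathbb{D}$ with $\int_{\mathbb{D}}|f|^2dA_\alpha<\infty$, $dA_{\alpha}(z)=(\alpha+1)(1-|z|^2)^{\alpha}dA(z)$, $dA$ normalized area measure. $C_{\psi,\phi}f=\psi\cdot(f\circ\phi)$. $W(T)=\{\langle Tf,f\rangle:\|f\|=1\}$. *)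

theory Defs
  imports "HOL-Analysis.Analysis"
begin

definition dA :: "real \<Rightarrow> complex measure" where
  "dA \<alpha> = density lborel
     (\<lambda>z. ennreal (indicator (ball 0 1) z * ((\<alpha> + 1) * (1 - (cmod z)\<^sup>2) powr \<alpha> / pi)))"

definition bergman :: "real \<Rightarrow> (complex \<Rightarrow> complex) set" where
  "bergman \<alpha> = {f. f holomorphic_on ball 0 1 \<and> integrable (dA \<alpha>) (\<lambda>z. (cmod (f z))\<^sup>2)}"

definition binner :: "real \<Rightarrow> (complex \<Rightarrow> complex) \<Rightarrow> (complex \<Rightarrow> complex) \<Rightarrow> complex" where
  "binner \<alpha> f g = integral\<^sup>L (dA \<alpha>) (\<lambda>z. f z * cnj (g z))"

definition bnorm :: "real \<Rightarrow> (complex \<Rightarrow> complex) \<Rightarrow> real" where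
  "bnorm \<alpha> f = sqrt (integral\<^sup>L (dA \<alpha>) (\<lambda>z. (cmod (f z))\<^sup>2))"

definition wcomp :: "(complex \<Rightarrow> complex) \<Rightarrow> (complex \<Rightarrow> complex) \<Rightarrow> (complex \<Rightarrow> complex) \<Rightarrow> (complex \<Rightarrow> complex)" where
  "wcomp \<psi> \<phi> f = (\<lambda>z. \<psi> z * f (\<phi> z))"

definition wcomp_bounded :: "real \<Rightarrow> (complex \<Rightarrow> complex) \<Rightarrow> (complex \<Rightarrow> complex) \<Rightarrow> bool" where
  "wcomp_bounded \<alpha> \<psi> \<phi> \<longleftrightarrow>
     (\<forall>f\<in>bergman \<alpha>. wcomp \<psi> \<phi> f \<in> bergman \<alpha>) \<and>
     (\<exists>M. \<forall>f\<in>bergman \<alpha>. bnorm \<alpha> (wcomp \<psi> \<phi> f) \<le> M * bnorm \<alpha> f)"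

definition numrange :: "real \<Rightarrow> ((complex \<Rightarrow> complex) \<Rightarrow> (complex \<Rightarrow> complex)) \<Rightarrow> complex set" where
  "numrange \<alpha> T = {binner \<alpha> (T f) f | f. f \<in> bergman \<alpha> \<and> bnorm \<alpha> f = 1}"

definition taylor_coeff :: "(complex \<Rightarrow> complex) \<Rightarrow> nat \<Rightarrow> complex" where
  "taylor_coeff f k = (deriv ^^ k) f 0 / of_nat (fact k)"

end

theory Submission
  imports Defs "HOL-Complex_Analysis.Complex_Analysis" "HOL-Real_Asymp.Real_Asymp"
begin


lemma lborel_complex:
  "(lborel :: complex measure) = distr (lborel \<Otimes>\<^sub>M lborel) borel (\<lambda>p. Complex (fst p) (snd p))"
proof (rule lborel_eqI)
  have meas: "(\<lambda>p. Complex (fst p) (snd p)) \<in> borel_measurable (lborel \<Otimes>\<^sub>M (lborel::real measure))"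
  proof -
    have "continuous_on UNIV (\<lambda>p::real\<times>real. Complex (fst p) (snd p))"
      unfolding Complex_eq by (intro continuous_intros)
    then have "(\<lambda>p::real\<times>real. Complex (fst p) (snd p)) \<in> borel_measurable borel"
      by (rule borel_measurable_continuous_onI)
    then show ?thesis by (simp add: lborel_prod)
  qed
  fix l u :: complex
  assume le: "\<And>b. b \<in> Basis \<Longrightarrow> l \<bullet> b \<le> u \<bullet> b"
  have "Re l \<le> Re u" "Im l \<le> Im u" using le[of 1] le[of \<i>] by (auto simp: Basis_complex_def)
  have pre: "(\<lambda>p. Complex (fst p) (snd p)) -` box l u \<inter> space (lborel \<Otimes>\<^sub>M lborel)
      = {Re l<..<Re u} \<times> {Im l<..<Im u}"
    by (auto simp: box_def Basis_complex_def space_pair_measure)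
  show "emeasure (distr (lborel \<Otimes>\<^sub>M lborel) borel (\<lambda>p. Complex (fst p) (snd p))) (box l u) =
      (\<Prod>b\<in>Basis. (u - l) \<bullet> b)"
    using meas \<open>Re l \<le> Re u\<close> \<open>Im l \<le> Im u\<close>
    by (simp add: emeasure_distr pre lborel.emeasure_pair_measure_Times Basis_complex_def ennreal_mult)
qed simp

lemma rot_pair_nn:
  fixes f :: "real \<times> real \<Rightarrow> ennreal" and c s :: real
  assumes f[measurable]: "f \<in> borel_measurable (lborel \<Otimes>\<^sub>M lborel)"
    and c: "c \<noteq> 0" and cs: "c^2 + s^2 = 1"
  shows "(\<integral>\<^sup>+p. f (c * fst p - s * snd p, s * fst p + c * snd p) \<partial>(lborel \<Otimes>\<^sub>M lborel))
       = (\<integral>\<^sup>+p. f p \<partial>(lborel \<Otimes>\<^sub>M lborel))"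
proof -
  have fb[measurable]: "f \<in> borel_measurable borel" using f by (simp add: lborel_prod)
  let ?F = "\<lambda>x y. f (c * x - s * y, s * x + c * y)"
  let ?G = "\<lambda>x v. f (x / c - s * v / c, v)"
  have step1: "(\<integral>\<^sup>+y. ?F x y \<partial>lborel) = ennreal (1/\<bar>c\<bar>) * (\<integral>\<^sup>+v. ?G x v \<partial>lborel)" for x
  proof -
    have "(\<integral>\<^sup>+y. ?F x y \<partial>lborel) = ennreal \<bar>1/c\<bar> * (\<integral>\<^sup>+v. ?F x (- s * x / c + (1/c) * v) \<partial>lborel)"
      using c by (intro nn_integral_real_affine) auto
    also have "(\<lambda>v. ?F x (- s * x / c + (1/c) * v)) = (\<lambda>v. ?G x v)"
    proof
      fix v
      have "c * x - s * (- s * x / c + 1 / c * v) = x / c - s * v / c"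
      proof -
        have "c * x - s * (- s * x / c + 1 / c * v) = (c * c + s * s) * x / c - s * v / c"
          using c by (simp add: field_simps)
        also have "c * c + s * s = 1" using cs by (simp add: power2_eq_square)
        finally show ?thesis by simp
      qed
      moreover have "s * x + c * (- s * x / c + 1 / c * v) = v"
        using c by (simp add: field_simps)
      ultimately show "?F x (- s * x / c + (1/c) * v) = ?G x v" by simp
    qed
    finally show ?thesis by simp
  qed
  have step2: "(\<integral>\<^sup>+x. ?G x v \<partial>lborel) = ennreal \<bar>c\<bar> * (\<integral>\<^sup>+u. f (u, v) \<partial>lborel)" for v
  proof -
    have "(\<integral>\<^sup>+x. ?G x v \<partial>lborel) = ennreal \<bar>c\<bar> * (\<integral>\<^sup>+u. ?G (s * v + c * u) v \<partial>lborel)"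
      using c by (intro nn_integral_real_affine) auto
    also have "(\<lambda>u. ?G (s * v + c * u) v) = (\<lambda>u. f (u, v))"
    proof
      fix u have "(s * v + c * u) / c - s * v / c = u" using c by (simp add: field_simps)
      then show "?G (s * v + c * u) v = f (u, v)" by simp
    qed
    finally show ?thesis .
  qed
  have "(\<integral>\<^sup>+p. f (c * fst p - s * snd p, s * fst p + c * snd p) \<partial>(lborel \<Otimes>\<^sub>M lborel))
      = (\<integral>\<^sup>+x. \<integral>\<^sup>+y. ?F x y \<partial>lborel \<partial>lborel)"
  proof -
    have mF: "(\<lambda>p. f (c * fst p - s * snd p, s * fst p + c * snd p)) \<in> borel_measurable (lborel \<Otimes>\<^sub>M lborel)"
      by measurable
    show ?thesis using lborel.nn_integral_fst[OF mF] by simp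
  qed
  also have "\<dots> = (\<integral>\<^sup>+x. ennreal (1/\<bar>c\<bar>) * (\<integral>\<^sup>+v. ?G x v \<partial>lborel) \<partial>lborel)"
    by (simp only: step1)
  also have "\<dots> = ennreal (1/\<bar>c\<bar>) * (\<integral>\<^sup>+x. \<integral>\<^sup>+v. ?G x v \<partial>lborel \<partial>lborel)"
    by (rule nn_integral_cmult) measurable
  also have "(\<integral>\<^sup>+x. \<integral>\<^sup>+v. ?G x v \<partial>lborel \<partial>lborel) = (\<integral>\<^sup>+v. \<integral>\<^sup>+x. ?G x v \<partial>lborel \<partial>lborel)"
    by (rule lborel_pair.Fubini[symmetric, where f="\<lambda>p. ?G (fst p) (snd p)", simplified]) measurable
  also have "\<dots> = (\<integral>\<^sup>+v. ennreal \<bar>c\<bar> * (\<integral>\<^sup>+u. f (u, v) \<partial>lborel) \<partial>lborel)"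
    by (simp only: step2)
  also have "\<dots> = ennreal \<bar>c\<bar> * (\<integral>\<^sup>+v. \<integral>\<^sup>+u. f (u, v) \<partial>lborel \<partial>lborel)"
    by (rule nn_integral_cmult) measurable
  also have "(\<integral>\<^sup>+v. \<integral>\<^sup>+u. f (u, v) \<partial>lborel \<partial>lborel) = (\<integral>\<^sup>+p. f p \<partial>(lborel \<Otimes>\<^sub>M lborel))"
    by (rule lborel_pair.nn_integral_snd) measurable
  finally show ?thesis
    using c by (simp add: mult.assoc[symmetric] ennreal_mult[symmetric])
qed

lemma meas_Complex: "(\<lambda>p. Complex (fst p) (snd p)) \<in> borel_measurable (lborel \<Otimes>\<^sub>M (lborel::real measure))"
proof -
  have "continuous_on UNIV (\<lambda>p::real\<times>real. Complex (fst p) (snd p))"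
    unfolding Complex_eq by (intro continuous_intros)
  then have "(\<lambda>p::real\<times>real. Complex (fst p) (snd p)) \<in> borel_measurable borel"
    by (rule borel_measurable_continuous_onI)
  then show ?thesis by (simp add: lborel_prod)
qed

lemma nn_integral_complex_pair:
  fixes g :: "complex \<Rightarrow> ennreal"
  assumes g: "g \<in> borel_measurable borel"
  shows "(\<integral>\<^sup>+z. g z \<partial>lborel) = (\<integral>\<^sup>+p. g (Complex (fst p) (snd p)) \<partial>(lborel \<Otimes>\<^sub>M lborel))"
proof -
  have "(\<integral>\<^sup>+z. g z \<partial>(lborel::complex measure)) =
     (\<integral>\<^sup>+z. g z \<partial>(distr (lborel \<Otimes>\<^sub>M lborel) borel (\<lambda>p. Complex (fst p) (snd p))))"
    by (simp only: lborel_complex[symmetric])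
  also have "\<dots> = (\<integral>\<^sup>+p. g (Complex (fst p) (snd p)) \<partial>(lborel \<Otimes>\<^sub>M lborel))"
    using g meas_Complex by (simp add: nn_integral_distr)
  finally show ?thesis .
qed

lemma ball_borel[measurable]: "ball (c::'a::metric_space) r \<in> sets borel"
  by simp

lemma mult_Complex: "w * Complex a b = Complex (Re w * a - Im w * b) (Im w * a + Re w * b)"
  by (simp add: complex_eq_iff)

lemma rot_complex_nn:
  fixes f :: "complex \<Rightarrow> ennreal" and w :: complex
  assumes f[measurable]: "f \<in> borel_measurable borel" and w: "cmod w = 1" "Re w \<noteq> 0"
  shows "(\<integral>\<^sup>+z. f (w * z) \<partial>lborel) = (\<integral>\<^sup>+z. f z \<partial>lborel)"
proof -
  have m1: "(\<lambda>z. f (w * z)) \<in> borel_measurable borel" by measurable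
  let ?f' = "\<lambda>p. f (Complex (fst p) (snd p))"
  have m2: "?f' \<in> borel_measurable (lborel \<Otimes>\<^sub>M lborel)"
    using meas_Complex by measurable
  have cs: "(Re w)^2 + (Im w)^2 = 1" using w cmod_power2[of w] by simp
  have "(\<integral>\<^sup>+z. f (w * z) \<partial>lborel) = (\<integral>\<^sup>+p. f (w * Complex (fst p) (snd p)) \<partial>(lborel \<Otimes>\<^sub>M lborel))"
    by (rule nn_integral_complex_pair[OF m1])
  also have "\<dots> = (\<integral>\<^sup>+p. ?f' (Re w * fst p - Im w * snd p, Im w * fst p + Re w * snd p) \<partial>(lborel \<Otimes>\<^sub>M lborel))"
    by (intro nn_integral_cong) (simp add: mult_Complex)
  also have "\<dots> = (\<integral>\<^sup>+p. ?f' p \<partial>(lborel \<Otimes>\<^sub>M lborel))"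
    by (rule rot_pair_nn[OF m2 w(2) cs])
  also have "\<dots> = (\<integral>\<^sup>+z. f z \<partial>lborel)"
    by (rule nn_integral_complex_pair[OF f, symmetric])
  finally show ?thesis .
qed

lemma sets_dA[simp, measurable_cong]: "sets (dA \<alpha>) = sets borel"
  by (simp add: dA_def)

lemma space_dA[simp]: "space (dA \<alpha>) = UNIV"
  by (simp add: dA_def)

lemma dA_rot:
  assumes w: "cmod w = 1" "Re w \<noteq> 0"
  shows "distr (dA \<alpha>) (dA \<alpha>) (\<lambda>z. w * z) = dA \<alpha>"
proof (rule measure_eqI)
  show "sets (distr (dA \<alpha>) (dA \<alpha>) (\<lambda>z. w * z)) = sets (dA \<alpha>)" by simp
  fix A assume "A \<in> sets (distr (dA \<alpha>) (dA \<alpha>) (\<lambda>z. w * z))"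
  then have A[measurable]: "A \<in> sets borel" by simp
  let ?\<rho> = "\<lambda>z. ennreal (indicator (ball 0 1) z * ((\<alpha> + 1) * (1 - (cmod z)\<^sup>2) powr \<alpha> / pi))"
  have mr[measurable]: "?\<rho> \<in> borel_measurable borel" by measurable
  have mT: "(\<lambda>z. w * z) \<in> measurable (dA \<alpha>) (dA \<alpha>)"
    by (simp add: measurable_cong_sets[OF sets_dA sets_dA])
  have rho_eq: "?\<rho> (w * z) = ?\<rho> z" for z
    using w by (simp add: norm_mult indicator_def)
  have pA[measurable]: "(\<lambda>z. w * z) -` A \<in> sets borel" using measurable_sets[OF mT, of A] A by simp
  have "emeasure (distr (dA \<alpha>) (dA \<alpha>) (\<lambda>z. w * z)) A = emeasure (dA \<alpha>) ((\<lambda>z. w * z) -` A)"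
    using mT A by (simp add: emeasure_distr)
  also have "\<dots> = (\<integral>\<^sup>+z. ?\<rho> z * indicator ((\<lambda>z. w * z) -` A) z \<partial>lborel)"
    unfolding dA_def
    by (subst emeasure_density) (auto simp: mult.commute)
  also have "\<dots> = (\<integral>\<^sup>+z. (\<lambda>u. ?\<rho> u * indicator A u) (w * z) \<partial>lborel)"
    using w by (intro nn_integral_cong) (simp add: norm_mult indicator_def)
  also have "\<dots> = (\<integral>\<^sup>+u. ?\<rho> u * indicator A u \<partial>lborel)"
    by (rule rot_complex_nn[OF _ w]) measurable
  also have "\<dots> = emeasure (dA \<alpha>) A"
    unfolding dA_def by (subst emeasure_density) (auto simp: mult.commute)
  finally show "emeasure (distr (dA \<alpha>) (dA \<alpha>) (\<lambda>z. w * z)) A = emeasure (dA \<alpha>) A" .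
qed

lemma dA_rot_integral:
  fixes F :: "complex \<Rightarrow> complex"
  assumes w: "cmod w = 1" "Re w \<noteq> 0" and F: "F \<in> borel_measurable borel"
  shows "(\<integral>z. F (w * z) \<partial>dA \<alpha>) = (\<integral>z. F z \<partial>dA \<alpha>)"
proof -
  have mT: "(\<lambda>z. w * z) \<in> measurable (dA \<alpha>) (dA \<alpha>)"
    by (simp add: measurable_cong_sets[OF sets_dA sets_dA])
  have F': "F \<in> borel_measurable (dA \<alpha>)" using F by (simp add: measurable_cong_sets[OF sets_dA refl])
  have "(\<integral>z. F (w * z) \<partial>dA \<alpha>) = integral\<^sup>L (distr (dA \<alpha>) (dA \<alpha>) (\<lambda>z. w * z)) F"
    by (rule integral_distr[OF mT F', symmetric])
  also have "\<dots> = (\<integral>z. F z \<partial>dA \<alpha>)" by (simp only: dA_rot[OF w])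
  finally show ?thesis .
qed

lemma cis_ne_1:
  assumes "0 < \<bar>x\<bar>" "\<bar>x\<bar> < pi"
  shows "cis x \<noteq> 1"
proof -
  have "sin x \<noteq> 0"
  proof (cases "x > 0")
    case True then show ?thesis using assms sin_gt_zero[of x] by auto
  next
    case False then show ?thesis using assms sin_gt_zero[of "-x"] by auto
  qed
  show ?thesis
  proof
    assume "cis x = 1"
    then have "Im (cis x) = Im 1" by simp
    then show False using \<open>sin x \<noteq> 0\<close> by simp
  qed
qed

lemma ortho:
  fixes n k :: nat and r :: real
  assumes nk: "n \<noteq> k"
  shows "(\<integral>z. indicator (ball 0 r) z * (z^n * cnj z^k) \<partial>dA \<alpha>) = (0::complex)"
proof -
  define \<theta> where "\<theta> = pi / (real (n + k) + 2)"
  define w where "w = cis \<theta>"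
  have th0: "0 < \<theta>" unfolding \<theta>_def by (auto simp: field_simps)
  have th1: "\<theta> < pi / 2"
  proof -
    have "2 < real (n + k) + 2" using nk by auto
    then have "pi / (real (n + k) + 2) < pi / 2"
      by (intro divide_strict_left_mono) auto
    then show ?thesis unfolding \<theta>_def .
  qed
  have w1: "cmod w = 1" unfolding w_def by simp
  have w2: "Re w \<noteq> 0"
  proof -
    have "cos \<theta> > 0" using th0 th1 by (intro cos_gt_zero_pi) auto
    then show ?thesis unfolding w_def by simp
  qed
  define \<omega> where "\<omega> = w^n * cnj w^k"
  have om: "\<omega> = cis ((real n - real k) * \<theta>)"
  proof -
    have a: "w^n = cis (real n * \<theta>)" unfolding w_def by (rule Complex.DeMoivre)
    have b: "cnj w^k = cis (real k * (-\<theta>))" unfolding w_def cis_cnj by (rule Complex.DeMoivre)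
    have "\<omega> = cis (real n * \<theta> + real k * (-\<theta>))" unfolding \<omega>_def a b by (rule cis_mult)
    also have "real n * \<theta> + real k * (-\<theta>) = (real n - real k) * \<theta>" by (simp add: algebra_simps)
    finally show ?thesis .
  qed
  have "\<bar>(real n - real k) * \<theta>\<bar> < pi"
  proof -
    have "\<bar>real n - real k\<bar> < real (n + k) + 2" by auto
    then have "\<bar>real n - real k\<bar> * \<theta> < (real (n + k) + 2) * \<theta>"
      using th0 by (intro mult_strict_right_mono) auto
    also have "(real (n + k) + 2) * \<theta> = pi" unfolding \<theta>_def by simp
    finally show ?thesis using th0 by (simp add: abs_mult)
  qed
  moreover have "0 < \<bar>(real n - real k) * \<theta>\<bar>" using nk th0 by (simp add: abs_mult)
  ultimately have omne: "\<omega> \<noteq> 1" unfolding om by (rule cis_ne_1[rotated])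
  define F where "F = (\<lambda>z::complex. indicator (ball 0 r) z * (z^n * cnj z^k) :: complex)"
  have Fm: "F \<in> borel_measurable borel"
  proof -
    have [measurable]: "(\<lambda>z::complex. z^n * cnj z^k) \<in> borel_measurable borel"
      by (intro borel_measurable_continuous_onI continuous_intros)
    show ?thesis unfolding F_def by measurable
  qed
  have Fw: "F (w * z) = \<omega> * F z" for z
    using w1 unfolding F_def \<omega>_def by (simp add: norm_mult indicator_def power_mult_distrib)
  have "(\<integral>z. F z \<partial>dA \<alpha>) = (\<integral>z. F (w * z) \<partial>dA \<alpha>)"
    by (rule dA_rot_integral[OF w1 w2 Fm, symmetric])
  also have "\<dots> = \<omega> * (\<integral>z. F z \<partial>dA \<alpha>)" by (simp add: Fw)
  finally have "(1 - \<omega>) * (\<integral>z. F z \<partial>dA \<alpha>) = 0" by (simp add: algebra_simps)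
  then show ?thesis using omne unfolding F_def by simp
qed



lemma unit_ball_vol_complex: "unit_ball_vol (real DIM(complex)) = pi"
  by (simp add: eval_unit_ball_vol)

lemma emeasure_ring:
  fixes x :: real
  shows "emeasure lborel (ball (0::complex) 1 \<inter> {z. x < (cmod z)^2}) = ennreal (pi * (1 - min 1 (max 0 x)))"
proof (cases "x < 0")
  case True
  then have "ball (0::complex) 1 \<inter> {z. x < (cmod z)^2} = ball 0 1"
    by (auto intro: less_le_trans[of _ 0])
  then show ?thesis using True emeasure_ball[of 1 "0::complex"] unit_ball_vol_complex by simp
next
  case False
  show ?thesis
  proof (cases "x < 1")
    case True
    have sq: "sqrt x ^ 2 = x" using False by simp
    have eq: "ball (0::complex) 1 \<inter> {z. x < (cmod z)^2} = ball 0 1 - cball 0 (sqrt x)"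
    proof -
      have iff1: "x < (cmod z)^2 \<longleftrightarrow> sqrt x < cmod z" for z :: complex
      proof -
        have e: "sqrt ((cmod z)^2) = cmod z" by simp
        show ?thesis using real_sqrt_less_iff[of x "(cmod z)^2"] unfolding e by blast
      qed
      show ?thesis
        by (intro set_eqI) (simp only: Int_iff mem_Collect_eq Diff_iff mem_cball_0 iff1 not_le)
    qed
    have sub: "cball (0::complex) (sqrt x) \<subseteq> ball 0 1"
    proof -
      have s1: "sqrt x < 1" using True by simp
      show ?thesis
      proof
        fix z :: complex assume "z \<in> cball 0 (sqrt x)"
        then have "cmod z \<le> sqrt x" by simp
        then have "cmod z < 1" using s1 by linarith
        then show "z \<in> ball 0 1" by simp
      qed
    qed
    have "emeasure lborel (ball (0::complex) 1 - cball 0 (sqrt x)) =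
          emeasure lborel (ball (0::complex) 1) - emeasure lborel (cball (0::complex) (sqrt x))"
    proof (rule emeasure_Diff)
      show "emeasure lborel (cball (0::complex) (sqrt x)) \<noteq> \<infinity>"
        using emeasure_lborel_cball_finite[of "0::complex" "sqrt x"] by (simp add: less_top)
    qed (use sub in auto)
    also have "\<dots> = ennreal pi - ennreal (pi * x)"
      using False emeasure_ball[of 1 "0::complex"] emeasure_cball[of "sqrt x" "0::complex"] unit_ball_vol_complex sq
      by simp
    also have "\<dots> = ennreal (pi * (1 - x))"
      using False True by (subst ennreal_minus) (auto simp: algebra_simps)
    finally show ?thesis using eq True False by simp
  next
    case False2: False
    then have "ball (0::complex) 1 \<inter> {z. x < (cmod z)^2} = {}"
      by (auto simp: power_less_one_iff) (smt (verit) norm_ge_zero power_le_one)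
    then show ?thesis using False2 by simp
  qed
qed

lemma emeasure_ivl:
  fixes x :: real
  shows "emeasure lborel ({0<..<1} \<inter> {x<..}) = ennreal (1 - min 1 (max 0 x))"
proof -
  consider "x < 0" | "0 \<le> x" "x < 1" | "1 \<le> x" by linarith
  then show ?thesis
  proof cases
    case 1
    then have "{0<..<1} \<inter> {x<..} = {0<..<(1::real)}" by auto
    then show ?thesis using 1 by simp
  next
    case 2
    then have "{0<..<1} \<inter> {x<..} = {x<..<(1::real)}" by auto
    then show ?thesis using 2 by simp
  next
    case 3
    then have "{0<..<1} \<inter> {x<..} = ({}::real set)" by auto
    then show ?thesis using 3 by simp
  qed
qed

lemma radial_distr:
  "distr (density lborel (indicator (ball (0::complex) 1))) borel (\<lambda>z. (cmod z)^2)
     = density lborel (\<lambda>s. ennreal pi * indicator {0<..<1} s)"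
proof (rule measure_eqI_lessThan)
  have pre: "(\<lambda>z::complex. (cmod z)^2) -` {x<..} \<inter> space (density lborel (indicator (ball (0::complex) 1)))
      = {z. x < (cmod z)^2}" for x
    by auto
  have L: "emeasure (distr (density lborel (indicator (ball (0::complex) 1))) borel (\<lambda>z. (cmod z)^2)) {x<..}
      = ennreal (pi * (1 - min 1 (max 0 x)))" for x
  proof -
    have "emeasure (distr (density lborel (indicator (ball (0::complex) 1))) borel (\<lambda>z. (cmod z)^2)) {x<..}
       = emeasure (density lborel (indicator (ball (0::complex) 1))) {z. x < (cmod z)^2}"
      by (subst emeasure_distr) (auto simp: pre vimage_def)
    also have "\<dots> = emeasure lborel (ball (0::complex) 1 \<inter> {z. x < (cmod z)^2})"
      by (rule emeasure_restricted) auto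
    finally show ?thesis by (simp add: emeasure_ring)
  qed
  have R: "emeasure (density lborel (\<lambda>s. ennreal pi * indicator {0<..<1} s)) {x<..}
      = ennreal (pi * (1 - min 1 (max 0 x)))" for x
  proof -
    have "emeasure (density lborel (\<lambda>s. ennreal pi * indicator {0<..<1} s)) {x<..}
        = (\<integral>\<^sup>+s. ennreal pi * indicator ({0<..<1} \<inter> {x<..}) s \<partial>lborel)"
      by (subst emeasure_density) (auto intro!: nn_integral_cong simp: indicator_def)
    also have "\<dots> = ennreal pi * emeasure lborel ({0<..<1} \<inter> {x<..})"
      by (rule nn_integral_cmult_indicator) auto
    also have "\<dots> = ennreal (pi * (1 - min 1 (max 0 x)))"
      by (simp add: emeasure_ivl ennreal_mult[symmetric])
    finally show ?thesis .
  qed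
  fix x :: real
  show "emeasure (distr (density lborel (indicator (ball (0::complex) 1))) borel (\<lambda>z. (cmod z)^2)) {x<..} < \<infinity>"
    using L by simp
  show "emeasure (distr (density lborel (indicator (ball (0::complex) 1))) borel (\<lambda>z. (cmod z)^2)) {x<..}
      = emeasure (density lborel (\<lambda>s. ennreal pi * indicator {0<..<1} s)) {x<..}"
    using L R by simp
qed simp_all

lemma radial_nn:
  fixes g :: "real \<Rightarrow> ennreal"
  assumes g[measurable]: "g \<in> borel_measurable borel"
  shows "(\<integral>\<^sup>+z. indicator (ball (0::complex) 1) z * g ((cmod z)^2) \<partial>lborel)
       = ennreal pi * (\<integral>\<^sup>+s. indicator {0<..<1} s * g s \<partial>lborel)"
proof -
  have "(\<integral>\<^sup>+z. indicator (ball (0::complex) 1) z * g ((cmod z)^2) \<partial>lborel)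
      = (\<integral>\<^sup>+z. g ((cmod z)^2) \<partial>density lborel (indicator (ball (0::complex) 1)))"
    by (subst nn_integral_density) auto
  also have "\<dots> = (\<integral>\<^sup>+s. g s \<partial>distr (density lborel (indicator (ball (0::complex) 1))) borel (\<lambda>z. (cmod z)^2))"
    by (subst nn_integral_distr) auto
  also have "\<dots> = (\<integral>\<^sup>+s. g s \<partial>density lborel (\<lambda>s. ennreal pi * indicator {0<..<1} s))"
    by (simp only: radial_distr)
  also have "\<dots> = (\<integral>\<^sup>+s. ennreal pi * (indicator {0<..<1} s * g s) \<partial>lborel)"
    by (subst nn_integral_density) (auto simp: mult.assoc)
  also have "\<dots> = ennreal pi * (\<integral>\<^sup>+s. indicator {0<..<1} s * g s \<partial>lborel)"
    by (rule nn_integral_cmult) auto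
  finally show ?thesis .
qed



definition nu :: "real \<Rightarrow> nat \<Rightarrow> real" where
  "nu \<alpha> k = fact k * Gamma (\<alpha> + 2) / Gamma (real k + \<alpha> + 2)"

lemma nu_pos: "\<alpha> > -1 \<Longrightarrow> nu \<alpha> k > 0"
  unfolding nu_def by (intro divide_pos_pos mult_pos_pos Gamma_real_pos) auto

lemma Beta_nu:
  assumes "\<alpha> > -1"
  shows "(\<alpha> + 1) * Beta (real k + 1) (\<alpha> + 1) = nu \<alpha> k"
proof -
  have g1: "Gamma (real k + 1) = fact k" using Gamma_fact[of k] by (simp add: add.commute)
  have "\<alpha> + 1 \<notin> \<int>\<^sub>\<le>\<^sub>0" using assms nonpos_Ints_nonpos by fastforce
  then have g2: "Gamma (\<alpha> + 1 + 1) = (\<alpha> + 1) * Gamma (\<alpha> + 1)" by (rule Gamma_plus1)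
  have e: "\<alpha> + 1 + 1 = \<alpha> + 2" "real k + 1 + (\<alpha> + 1) = real k + \<alpha> + 2" by simp_all
  show ?thesis unfolding Beta_def nu_def g1 using g2 unfolding e by (simp add: field_simps)
qed

lemma nu_nn:
  assumes a: "\<alpha> > -1"
  shows "(\<integral>\<^sup>+z. ennreal ((cmod z)^(2*k)) \<partial>dA \<alpha>) = ennreal (nu \<alpha> k)"
proof -
  let ?g = "\<lambda>s::real. ennreal ((\<alpha> + 1) * (1 - s) powr \<alpha> / pi * s^k)"
  have "(\<integral>\<^sup>+z. ennreal ((cmod z)^(2*k)) \<partial>dA \<alpha>) =
     (\<integral>\<^sup>+z. ennreal (indicator (ball 0 1) z * ((\<alpha> + 1) * (1 - (cmod z)\<^sup>2) powr \<alpha> / pi)) *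
        ennreal ((cmod z)^(2*k)) \<partial>lborel)"
    unfolding dA_def by (subst nn_integral_density) auto
  also have "\<dots> = (\<integral>\<^sup>+z. indicator (ball (0::complex) 1) z * ?g ((cmod z)^2) \<partial>lborel)"
  proof (intro nn_integral_cong)
    fix z :: complex
    show "ennreal (indicator (ball 0 1) z * ((\<alpha> + 1) * (1 - (cmod z)\<^sup>2) powr \<alpha> / pi)) *
        ennreal ((cmod z)^(2*k)) = indicator (ball (0::complex) 1) z * ?g ((cmod z)^2)"
    proof (cases "z \<in> ball 0 1")
      case True
      have nn: "0 \<le> (\<alpha> + 1) * (1 - (cmod z)\<^sup>2) powr \<alpha> / pi" using a by simp
      have "ennreal ((\<alpha> + 1) * (1 - (cmod z)\<^sup>2) powr \<alpha> / pi) * ennreal ((cmod z)^(2*k))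
          = ennreal ((\<alpha> + 1) * (1 - (cmod z)\<^sup>2) powr \<alpha> / pi * (cmod z)^(2*k))"
        using ennreal_mult[OF nn, of "(cmod z)^(2*k)"] by simp
      then show ?thesis using True by (simp add: power_mult)
    qed simp
  qed
  also have "\<dots> = ennreal pi * (\<integral>\<^sup>+s. indicator {0<..<1} s * ?g s \<partial>lborel)"
    by (rule radial_nn) measurable
  also have "(\<integral>\<^sup>+s. indicator {0<..<1} s * ?g s \<partial>lborel) =
      (\<integral>\<^sup>+s. ennreal (indicator {0<..<1} s * ((\<alpha> + 1) / pi * (s^k * (1 - s) powr \<alpha>))) \<partial>lborel)"
    by (intro nn_integral_cong) (auto simp: indicator_def algebra_simps)
  also have "\<dots> = ennreal ((\<alpha> + 1) / pi * Beta (real k + 1) (\<alpha> + 1))"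
  proof (rule nn_integral_has_integral_lebesgue)
    show "0 \<le> (\<alpha> + 1) / pi * (x ^ k * (1 - x) powr \<alpha>)" if "x \<in> {0<..<1}" for x
      using a that by simp
    have hb: "((\<lambda>s. s powr (real k + 1 - 1) * (1 - s) powr (\<alpha> + 1 - 1)) has_integral Beta (real k + 1) (\<alpha> + 1)) {0<..<1}"
      using has_integral_Beta_real[of "real k + 1" "\<alpha> + 1"] a by (simp only: has_integral_Icc_iff_Ioo)
    have "((\<lambda>s. s ^ k * (1 - s) powr \<alpha>) has_integral Beta (real k + 1) (\<alpha> + 1)) {0<..<1}"
    proof (rule has_integral_cong[THEN iffD1, OF _ hb])
      fix x :: real assume "x \<in> {0<..<1}"
      then show "x powr (real k + 1 - 1) * (1 - x) powr (\<alpha> + 1 - 1) = x ^ k * (1 - x) powr \<alpha>"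
        by (simp add: powr_realpow)
    qed
    then show "((\<lambda>s. (\<alpha> + 1) / pi * (s ^ k * (1 - s) powr \<alpha>)) has_integral
        ((\<alpha> + 1) / pi * Beta (real k + 1) (\<alpha> + 1))) {0<..<1}"
      by (rule has_integral_mult_right)
  qed
  also have "ennreal pi * ennreal ((\<alpha> + 1) / pi * Beta (real k + 1) (\<alpha> + 1)) = ennreal (nu \<alpha> k)"
  proof -
    have "0 \<le> (\<alpha> + 1) / pi * Beta (real k + 1) (\<alpha> + 1)"
      using a by (simp add: Beta_def)
    then have "ennreal pi * ennreal ((\<alpha> + 1) / pi * Beta (real k + 1) (\<alpha> + 1))
       = ennreal (pi * ((\<alpha> + 1) / pi * Beta (real k + 1) (\<alpha> + 1)))"
      by (intro ennreal_mult[symmetric]) auto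
    also have "pi * ((\<alpha> + 1) / pi * Beta (real k + 1) (\<alpha> + 1)) = (\<alpha> + 1) * Beta (real k + 1) (\<alpha> + 1)"
      by simp
    finally show ?thesis using Beta_nu[OF a] by simp
  qed
  finally show ?thesis .
qed

lemma nu_0: assumes "\<alpha> > -1" shows "nu \<alpha> 0 = 1"
proof -
  have "Gamma (\<alpha> + 2) > 0" using assms by (intro Gamma_real_pos) simp
  then show ?thesis unfolding nu_def by (simp add: add.commute)
qed

lemma dA_space: assumes "\<alpha> > -1" shows "emeasure (dA \<alpha>) (space (dA \<alpha>)) = 1"
proof -
  have "(\<integral>\<^sup>+z. ennreal ((cmod z)^(2*0)) \<partial>dA \<alpha>) = ennreal (nu \<alpha> 0)" by (rule nu_nn[OF assms])
  then show ?thesis using nu_0[OF assms] by (simp add: nn_integral_const)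
qed

lemma finite_dA: assumes "\<alpha> > -1" shows "finite_measure (dA \<alpha>)"
  by (rule finite_measureI) (use dA_space[OF assms] in simp)

lemma measure_dA: "\<alpha> > -1 \<Longrightarrow> measure (dA \<alpha>) UNIV = 1"
  using dA_space[of \<alpha>] by (simp add: measure_def)

lemma nu_int:
  assumes "\<alpha> > -1"
  shows "has_bochner_integral (dA \<alpha>) (\<lambda>z. (cmod z)^(2*k)) (nu \<alpha> k)"
  using nu_pos[OF assms, of k] nu_nn[OF assms, of k]
  by (intro has_bochner_integral_nn_integral) (auto simp: measurable_cong_sets[OF sets_dA refl])



lemma meas_ind_cont:
  fixes h :: "complex \<Rightarrow> complex"
  assumes "continuous_on (ball 0 r) h"
  shows "(\<lambda>z. indicator (ball 0 r) z * h z) \<in> borel_measurable borel"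
proof -
  have "(\<lambda>z. indicator (ball 0 r) z *\<^sub>R h z) \<in> borel_measurable borel"
    by (rule borel_measurable_continuous_on_indicator) (auto simp: assms)
  moreover have "(\<lambda>z. indicator (ball 0 r) z *\<^sub>R h z) = (\<lambda>z. indicator (ball 0 r) z * h z)"
    by (auto simp: indicator_def)
  ultimately show ?thesis by simp
qed

lemma poly_meas[measurable]: "(\<lambda>z::complex. z^n * cnj z^k) \<in> borel_measurable borel"
  by (intro borel_measurable_continuous_onI continuous_intros)

lemma coeff_ball_r:
  fixes h :: "complex \<Rightarrow> complex" and r :: real
  assumes a: "\<alpha> > -1" and h: "h holomorphic_on ball 0 1" and r: "0 < r" "r < 1"
  shows "(\<integral>z. indicator (ball 0 r) z * (indicator (ball 0 1) z * (h z * z^j * cnj z^k)) \<partial>dA \<alpha>)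
       = (if j \<le> k then taylor_coeff h (k - j) *
            (\<integral>z. indicator (ball 0 r) z * (z^k * cnj z^k) \<partial>dA \<alpha>) else 0)"
proof -
  interpret finite_measure "dA \<alpha>" by (rule finite_dA[OF a])
  define c where "c n = taylor_coeff h n" for n
  have ser: "(\<lambda>n. c n * z^n) sums h z" if "z \<in> ball 0 1" for z
    using holomorphic_power_series[OF h that] by (simp add: c_def taylor_coeff_def)
  define f where "f n z = c n * (indicator (ball 0 r) z * (z^(n+j) * cnj z^k))" for n z
  have Sr: "summable (\<lambda>n. cmod (c n) * r^n)"
  proof -
    define \<rho> where "\<rho> = (1 + r) / 2"
    have \<rho>: "r < \<rho>" "\<rho> < 1" "0 < \<rho>" using r by (auto simp: \<rho>_def)
    have n\<rho>: "cmod (complex_of_real \<rho>) = \<rho>" using \<rho> by (simp add: abs_of_pos)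
    have nr: "cmod (complex_of_real r) = r" using r by (simp add: abs_of_pos)
    have x1: "complex_of_real \<rho> \<in> ball 0 1"
      unfolding mem_ball_0 n\<rho> using \<rho> by simp
    have "summable (\<lambda>n. c n * (complex_of_real \<rho>)^n)"
      using ser[OF x1] by (rule sums_summable)
    moreover have "cmod (complex_of_real r) < cmod (complex_of_real \<rho>)"
      unfolding n\<rho> nr using \<rho> by simp
    ultimately have "summable (\<lambda>n. norm (c n * (complex_of_real r)^n))"
      by (rule powser_insidea)
    then show ?thesis using r by (simp add: norm_mult norm_power)
  qed
  have fb: "norm (f n z) \<le> cmod (c n) * r^n" for n z
  proof (cases "z \<in> ball 0 r")
    case True
    then have z: "cmod z < r" by simp
    have "cmod z ^ (n + j) * cmod z ^ k \<le> cmod z ^ n"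
    proof -
      have "cmod z ^ (n + j) * cmod z ^ k = cmod z ^ n * (cmod z ^ j * cmod z ^ k)"
        by (simp add: power_add)
      also have "\<dots> \<le> cmod z ^ n * 1"
        using z r by (intro mult_left_mono mult_le_one power_le_one) auto
      finally show ?thesis by simp
    qed
    also have "\<dots> \<le> r ^ n" using z by (intro power_mono) auto
    finally show ?thesis using True unfolding f_def
      by (simp add: norm_mult norm_power mult_left_mono)
  qed (use r in \<open>simp add: f_def\<close>)
  have fm[measurable]: "f n \<in> borel_measurable (dA \<alpha>)" for n
    unfolding f_def measurable_cong_sets[OF sets_dA refl] by measurable
  have fi: "integrable (dA \<alpha>) (f n)" for n
    by (rule integrable_const_bound[where B="cmod (c n) * r^n"]) (auto simp: fb)
  have fs: "summable (\<lambda>n. norm (f n z))" for z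
    by (rule summable_comparison_test[OF _ Sr]) (auto intro!: exI[of _ 0] simp: fb)
  have fis: "summable (\<lambda>n. \<integral>z. norm (f n z) \<partial>dA \<alpha>)"
  proof (rule summable_comparison_test[OF _ Sr], intro exI[of _ 0] allI impI)
    fix n :: nat
    have "(\<integral>z. norm (f n z) \<partial>dA \<alpha>) \<le> (\<integral>z. cmod (c n) * r^n \<partial>dA \<alpha>)"
      using fi by (intro integral_mono) (auto simp: fb)
    also have "\<dots> = cmod (c n) * r^n" using measure_dA[OF a] by simp
    finally show "norm (\<integral>z. norm (f n z) \<partial>dA \<alpha>) \<le> cmod (c n) * r^n" by simp
  qed
  have pt: "indicator (ball 0 r) z * (indicator (ball 0 1) z * (h z * z^j * cnj z^k)) = (\<Sum>n. f n z)" for z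
  proof (cases "z \<in> ball 0 r")
    case True
    then have z1: "z \<in> ball 0 1" using r by simp
    have "(\<lambda>n. c n * z^n * (z^j * cnj z^k)) sums (h z * (z^j * cnj z^k))"
      by (rule sums_mult2[OF ser[OF z1]])
    moreover have "(\<lambda>n. c n * z^n * (z^j * cnj z^k)) = (\<lambda>n. f n z)"
      using True by (auto simp: f_def power_add mult_ac)
    ultimately have "(\<lambda>n. f n z) sums (h z * (z^j * cnj z^k))" by simp
    then show ?thesis using True z1 by (simp add: sums_iff mult_ac)
  qed (simp add: f_def)
  have "(\<integral>z. indicator (ball 0 r) z * (indicator (ball 0 1) z * (h z * z^j * cnj z^k)) \<partial>dA \<alpha>)
      = (\<integral>z. (\<Sum>n. f n z) \<partial>dA \<alpha>)" by (simp only: pt)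
  also have "\<dots> = (\<Sum>n. integral\<^sup>L (dA \<alpha>) (f n))"
    by (rule integral_suminf[OF fi AE_I2[OF fs] fis])
  also have "(\<lambda>n. integral\<^sup>L (dA \<alpha>) (f n)) = (\<lambda>n. if n + j = k then c n *
      (\<integral>z. indicator (ball 0 r) z * (z^k * cnj z^k) \<partial>dA \<alpha>) else 0)"
  proof
    fix n
    have "integral\<^sup>L (dA \<alpha>) (f n) = c n * (\<integral>z. indicator (ball 0 r) z * (z^(n+j) * cnj z^k) \<partial>dA \<alpha>)"
      unfolding f_def by simp
    then show "integral\<^sup>L (dA \<alpha>) (f n) = (if n + j = k then c n *
      (\<integral>z. indicator (ball 0 r) z * (z^k * cnj z^k) \<partial>dA \<alpha>) else 0)"
      using ortho[of "n + j" k \<alpha> r] by auto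
  qed
  also have "(\<Sum>n. if n + j = k then c n * (\<integral>z. indicator (ball 0 r) z * (z^k * cnj z^k) \<partial>dA \<alpha>) else 0)
     = (if j \<le> k then c (k - j) * (\<integral>z. indicator (ball 0 r) z * (z^k * cnj z^k) \<partial>dA \<alpha>) else 0)"
  proof (cases "j \<le> k")
    case True
    then have "(\<lambda>n. if n + j = k then c n * (\<integral>z. indicator (ball 0 r) z * (z^k * cnj z^k) \<partial>dA \<alpha>) else 0)
      = (\<lambda>n. if n = k - j then c n * (\<integral>z. indicator (ball 0 r) z * (z^k * cnj z^k) \<partial>dA \<alpha>) else 0)"
      by (intro ext) auto
    moreover have "(\<lambda>n. if n = k - j then c n * (\<integral>z. indicator (ball 0 r) z * (z^k * cnj z^k) \<partial>dA \<alpha>) else 0)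
      sums (c (k - j) * (\<integral>z. indicator (ball 0 r) z * (z^k * cnj z^k) \<partial>dA \<alpha>))"
      by (rule sums_single)
    ultimately show ?thesis using True by (simp add: sums_iff)
  qed simp
  finally show ?thesis by (simp add: c_def)
qed



lemma AE_ball_dA: "AE z in dA \<alpha>. z \<in> ball 0 1"
  unfolding dA_def by (subst AE_density) (auto simp: indicator_def)

lemma zk_cnj: "z^k * cnj z^k = complex_of_real ((cmod z)^(2*k))"
proof -
  have "z^k * cnj z^k = (z * cnj z)^k" by (simp add: power_mult_distrib)
  also have "z * cnj z = complex_of_real ((cmod z)^2)" by (rule complex_norm_square[symmetric])
  also have "(complex_of_real ((cmod z)^2))^k = complex_of_real ((cmod z)^(2*k))"
    by (simp only: of_real_power[symmetric] power_mult)
  finally show ?thesis .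
qed

lemma ind_norm:
  assumes a: "\<alpha> > -1"
  shows "(\<integral>z. indicator (ball 0 1) z * (z^k * cnj z^k) \<partial>dA \<alpha>) = complex_of_real (nu \<alpha> k)"
proof -
  have "(\<integral>z. indicator (ball 0 1) z * (z^k * cnj z^k) \<partial>dA \<alpha>) = (\<integral>z. complex_of_real ((cmod z)^(2*k)) \<partial>dA \<alpha>)"
    by (rule integral_cong_AE) (auto simp: zk_cnj measurable_cong_sets[OF sets_dA refl] intro!: AE_mp[OF AE_ball_dA AE_I2])
  also have "\<dots> = complex_of_real (nu \<alpha> k)"
    using has_bochner_integral_integral_eq[OF nu_int[OF a, of k]] integral_complex_of_real
    by metis
  finally show ?thesis .
qed

lemma coeff_integral:
  fixes h :: "complex \<Rightarrow> complex"
  assumes a: "\<alpha> > -1" and h: "h holomorphic_on ball 0 1"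
    and hi: "integrable (dA \<alpha>) (\<lambda>z. indicator (ball 0 1) z * cmod (h z))"
  shows "(\<integral>z. indicator (ball 0 1) z * (h z * z^j * cnj z^k) \<partial>dA \<alpha>)
       = (if j \<le> k then taylor_coeff h (k - j) * complex_of_real (nu \<alpha> k) else 0)"
proof -
  interpret finite_measure "dA \<alpha>" by (rule finite_dA[OF a])
  define r where "r n = 1 - 1 / (real n + 2)" for n
  have r0: "0 < r n" "r n < 1" for n by (auto simp: r_def field_simps)
  have rlim: "r \<longlonglongrightarrow> 1" unfolding r_def by real_asymp
  have ev: "eventually (\<lambda>n. z \<in> ball 0 (r n)) sequentially" if "z \<in> ball 0 1" for z :: complex
    using order_tendstoD(1)[OF rlim, of "cmod z"] that by simp
  have hc: "continuous_on (ball 0 1) h" using h by (rule holomorphic_on_imp_continuous_on)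
  have mh[measurable]: "(\<lambda>z. indicator (ball 0 1) z * h z) \<in> borel_measurable borel"
    by (rule meas_ind_cont[OF hc])
  define I where "I z = indicator (ball 0 1) z * (h z * z^j * cnj z^k)" for z
  have I_eq: "I = (\<lambda>z. (indicator (ball 0 1) z * h z) * (z^j * cnj z^k))"
    by (auto simp: I_def mult_ac)
  have Im[measurable]: "I \<in> borel_measurable (dA \<alpha>)"
    unfolding I_eq measurable_cong_sets[OF sets_dA refl] by measurable
  define T where "T n = (\<integral>z. indicator (ball 0 (r n)) z * (z^k * cnj z^k) \<partial>dA \<alpha>)" for n
  have lim1: "(\<lambda>n. \<integral>z. indicator (ball 0 (r n)) z * I z \<partial>dA \<alpha>) \<longlonglongrightarrow> integral\<^sup>L (dA \<alpha>) I"
  proof (rule integral_dominated_convergence[where w="\<lambda>z. indicator (ball 0 1) z * cmod (h z)"])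
    show "I \<in> borel_measurable (dA \<alpha>)" by (rule Im)
    show "(\<lambda>z. indicator (ball 0 (r n)) z * I z) \<in> borel_measurable (dA \<alpha>)" for n
      using Im by (simp add: measurable_cong_sets[OF sets_dA refl])
    show "integrable (dA \<alpha>) (\<lambda>z. indicator (ball 0 1) z * cmod (h z))" by (rule hi)
    show "AE z in dA \<alpha>. (\<lambda>n. indicator (ball 0 (r n)) z * I z) \<longlonglongrightarrow> I z"
    proof (rule AE_I2)
      fix z
      show "(\<lambda>n. indicator (ball 0 (r n)) z * I z) \<longlonglongrightarrow> I z"
      proof (cases "z \<in> ball 0 1")
        case True
        show ?thesis
          by (rule tendsto_eventually) (rule eventually_mono[OF ev[OF True]], simp)
      next
        case False
        then show ?thesis by (simp add: I_def)
      qed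
    qed
    show "AE z in dA \<alpha>. norm (indicator (ball 0 (r n)) z * I z) \<le> indicator (ball 0 1) z * cmod (h z)" for n
    proof (rule AE_I2)
      fix z
      show "norm (indicator (ball 0 (r n)) z * I z) \<le> indicator (ball 0 1) z * cmod (h z)"
      proof (cases "z \<in> ball 0 1")
        case True
        then have z: "cmod z < 1" by simp
        have "cmod z ^ j * cmod z ^ k \<le> 1" using z by (intro mult_le_one power_le_one) auto
        then have "cmod (h z) * (cmod z ^ j * cmod z ^ k) \<le> cmod (h z)"
          by (simp add: mult_left_le)
        then show ?thesis using True
          by (simp add: I_def norm_mult norm_power indicator_def mult_ac)
      next
        case False
        then show ?thesis by (simp add: I_def)
      qed
    qed
  qed
  have lim2: "T \<longlonglongrightarrow> complex_of_real (nu \<alpha> k)"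
  proof -
    have "T \<longlonglongrightarrow> (\<integral>z. indicator (ball 0 1) z * (z^k * cnj z^k) \<partial>dA \<alpha>)"
      unfolding T_def
    proof (rule integral_dominated_convergence[where w="\<lambda>z. 1"])
      show "(\<lambda>z. indicator (ball 0 1) z * (z^k * cnj z^k)) \<in> borel_measurable (dA \<alpha>)"
        by (simp add: measurable_cong_sets[OF sets_dA refl])
      show "(\<lambda>z. indicator (ball 0 (r n)) z * (z^k * cnj z^k)) \<in> borel_measurable (dA \<alpha>)" for n
        by (simp add: measurable_cong_sets[OF sets_dA refl])
      show "integrable (dA \<alpha>) (\<lambda>z. 1::real)" by simp
      show "AE z in dA \<alpha>. (\<lambda>n. indicator (ball 0 (r n)) z * (z^k * cnj z^k)) \<longlonglongrightarrow>
          indicator (ball 0 1) z * (z^k * cnj z^k)"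
      proof (rule AE_I2)
        fix z :: complex
        show "(\<lambda>n. indicator (ball 0 (r n)) z * (z^k * cnj z^k)) \<longlonglongrightarrow>
          indicator (ball 0 1) z * (z^k * cnj z^k)"
        proof (cases "z \<in> ball 0 1")
          case True
          then have z1: "cmod z < 1" by simp
          show ?thesis
            by (rule tendsto_eventually) (rule eventually_mono[OF ev[OF True]], simp add: indicator_def z1)
        next
          case False
          have "indicator (ball 0 (r n)) z = (0::complex)" for n
            using False r0[of n] by (auto simp: indicator_def)
          then show ?thesis using False by simp
        qed
      qed
      show "AE z in dA \<alpha>. norm (indicator (ball 0 (r n)) z * (z^k * cnj z^k)) \<le> (1::real)" for n
      proof (rule AE_I2)
        fix z :: complex
        show "norm (indicator (ball 0 (r n)) z * (z^k * cnj z^k)) \<le> (1::real)"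
        proof (cases "z \<in> ball 0 (r n)")
          case True
          then have "cmod z < 1" using r0[of n] by simp
          then have "cmod z ^ k * cmod z ^ k \<le> 1" by (intro mult_le_one power_le_one) auto
          then show ?thesis using True by (simp add: norm_mult norm_power)
        qed simp
      qed
    qed
    then show ?thesis using ind_norm[OF a] by simp
  qed
  have eqn: "(\<integral>z. indicator (ball 0 (r n)) z * I z \<partial>dA \<alpha>)
      = (if j \<le> k then taylor_coeff h (k - j) * T n else 0)" for n
    unfolding I_def T_def by (rule coeff_ball_r[OF a h r0])
  have lim3: "(\<lambda>n. \<integral>z. indicator (ball 0 (r n)) z * I z \<partial>dA \<alpha>) \<longlonglongrightarrow>
      (if j \<le> k then taylor_coeff h (k - j) * complex_of_real (nu \<alpha> k) else 0)"
    unfolding eqn by (cases "j \<le> k") (auto intro!: tendsto_mult_left lim2)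
  have "integral\<^sup>L (dA \<alpha>) I = (if j \<le> k then taylor_coeff h (k - j) * complex_of_real (nu \<alpha> k) else 0)"
    by (rule LIMSEQ_unique[OF lim1 lim3])
  then show ?thesis by (simp add: I_def[abs_def])
qed



lemma ind_integrable:
  assumes a: "\<alpha> > -1"
  shows "integrable (dA \<alpha>) (\<lambda>z. indicator (ball 0 1) z * (z^j * cnj z^k))"
proof -
  interpret finite_measure "dA \<alpha>" by (rule finite_dA[OF a])
  show ?thesis
  proof (rule integrable_const_bound[where B=1])
    show "AE z in dA \<alpha>. norm (indicator (ball 0 1) z * (z^j * cnj z^k)) \<le> 1"
    proof (rule AE_I2)
      fix z :: complex
      show "norm (indicator (ball 0 1) z * (z^j * cnj z^k)) \<le> 1"
      proof (cases "z \<in> ball 0 1")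
        case True
        then have "cmod z < 1" by simp
        then have "cmod z ^ j * cmod z ^ k \<le> 1" by (intro mult_le_one power_le_one) auto
        then show ?thesis using True by (simp add: norm_mult norm_power)
      qed simp
    qed
    show "(\<lambda>z. indicator (ball 0 1) z * (z^j * cnj z^k)) \<in> borel_measurable (dA \<alpha>)"
      by (simp add: measurable_cong_sets[OF sets_dA refl])
  qed
qed

lemma h_integrable:
  fixes h :: "complex \<Rightarrow> complex"
  assumes a: "\<alpha> > -1" and h: "h holomorphic_on ball 0 1"
    and hi: "integrable (dA \<alpha>) (\<lambda>z. indicator (ball 0 1) z * cmod (h z))"
  shows "integrable (dA \<alpha>) (\<lambda>z. indicator (ball 0 1) z * (h z * z^j * cnj z^k))"
proof (rule Bochner_Integration.integrable_bound[OF hi])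
  have hc: "continuous_on (ball 0 1) h" using h by (rule holomorphic_on_imp_continuous_on)
  have mh[measurable]: "(\<lambda>z. indicator (ball 0 1) z * h z) \<in> borel_measurable borel"
    by (rule meas_ind_cont[OF hc])
  have "(\<lambda>z. indicator (ball 0 1) z * (h z * z^j * cnj z^k)) = (\<lambda>z. (indicator (ball 0 1) z * h z) * (z^j * cnj z^k))"
    by (auto simp: mult_ac)
  then show "(\<lambda>z. indicator (ball 0 1) z * (h z * z^j * cnj z^k)) \<in> borel_measurable (dA \<alpha>)"
    by (simp add: measurable_cong_sets[OF sets_dA refl])
  show "AE z in dA \<alpha>. norm (indicator (ball 0 1) z * (h z * z^j * cnj z^k)) \<le> norm (indicator (ball 0 1) z * cmod (h z))"
  proof (rule AE_I2)
    fix z :: complex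
    show "norm (indicator (ball 0 1) z * (h z * z^j * cnj z^k)) \<le> norm (indicator (ball 0 1) z * cmod (h z))"
    proof (cases "z \<in> ball 0 1")
      case True
      then have "cmod z < 1" by simp
      then have "cmod z ^ j * cmod z ^ k \<le> 1" by (intro mult_le_one power_le_one) auto
      then have "cmod (h z) * (cmod z ^ j * cmod z ^ k) \<le> cmod (h z)" by (simp add: mult_left_le)
      then show ?thesis using True by (simp add: norm_mult norm_power mult_ac)
    qed simp
  qed
qed



lemma le_1_sq: "(t::real) \<le> 1 + t^2"
proof -
  have "0 \<le> (t - 1)^2" by simp
  then have "2 * t \<le> 1 + t^2" by (simp add: power2_eq_square algebra_simps)
  moreover have "0 \<le> t^2" by simp
  ultimately show ?thesis by linarith
qed

lemma psi_L1:
  fixes \<psi> :: "complex \<Rightarrow> complex"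
  assumes a: "\<alpha> > -1" and l: "cmod l \<le> 1"
    and h: "\<psi> holomorphic_on ball 0 1"
    and wb: "wcomp_bounded \<alpha> \<psi> (\<lambda>z. l * z)"
  shows "integrable (dA \<alpha>) (\<lambda>z. indicator (ball 0 1) z * cmod (\<psi> z))"
proof -
  interpret finite_measure "dA \<alpha>" by (rule finite_dA[OF a])
  define f0 where "f0 = (\<lambda>z::complex. indicator (ball 0 1) z :: complex)"
  have f0h: "f0 holomorphic_on ball 0 1"
    by (subst holomorphic_cong[of _ _ _ "\<lambda>_. 1"]) (auto simp: f0_def)
  have f0i: "integrable (dA \<alpha>) (\<lambda>z. (cmod (f0 z))^2)"
  proof (rule integrable_const_bound[where B=1])
    show "AE x in dA \<alpha>. norm ((cmod (f0 x))\<^sup>2) \<le> 1" by (auto simp: f0_def indicator_def)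
    show "(\<lambda>z. (cmod (f0 z))^2) \<in> borel_measurable (dA \<alpha>)"
      by (simp add: f0_def measurable_cong_sets[OF sets_dA refl])
  qed
  have "f0 \<in> bergman \<alpha>" using f0h f0i by (simp add: bergman_def)
  then have "wcomp \<psi> (\<lambda>z. l * z) f0 \<in> bergman \<alpha>" using wb by (simp add: wcomp_bounded_def)
  then have "integrable (dA \<alpha>) (\<lambda>z. (cmod (\<psi> z * f0 (l * z)))^2)"
    by (simp add: bergman_def wcomp_def)
  then have "integrable (dA \<alpha>) (\<lambda>z. indicator (ball 0 1) z *\<^sub>R (cmod (\<psi> z * f0 (l * z)))^2)"
    by (intro integrable_mult_indicator) auto
  moreover have "(\<lambda>z. indicator (ball 0 1) z *\<^sub>R (cmod (\<psi> z * f0 (l * z)))^2) = (\<lambda>z. indicator (ball 0 1) z * (cmod (\<psi> z))^2)"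
  proof (rule ext)
    fix z :: complex
    show "indicator (ball 0 1) z *\<^sub>R (cmod (\<psi> z * f0 (l * z)))^2 = indicator (ball 0 1) z * (cmod (\<psi> z))^2"
  proof (cases "z \<in> ball 0 1")
    case True
    have "cmod l * cmod z \<le> cmod z" using l by (intro mult_left_le_one_le) auto
    then have "cmod (l * z) < 1" using True by (simp add: norm_mult)
    then show ?thesis using True by (simp add: f0_def)
  qed simp
  qed
  ultimately have i2: "integrable (dA \<alpha>) (\<lambda>z. indicator (ball 0 1) z * (cmod (\<psi> z))^2)" by (simp only:)
  show ?thesis
  proof (rule Bochner_Integration.integrable_bound)
    show "integrable (dA \<alpha>) (\<lambda>z. 1 + indicator (ball 0 1) z * (cmod (\<psi> z))^2)"
      using i2 by simp
    have hc: "continuous_on (ball 0 1) \<psi>" using h by (rule holomorphic_on_imp_continuous_on)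
    have [measurable]: "(\<lambda>z. indicator (ball 0 1) z * \<psi> z) \<in> borel_measurable borel"
      by (rule meas_ind_cont[OF hc])
    have "(\<lambda>z. indicator (ball 0 1) z * cmod (\<psi> z)) = (\<lambda>z. cmod (indicator (ball 0 1) z * \<psi> z))"
      by (auto simp: indicator_def)
    then show "(\<lambda>z. indicator (ball 0 1) z * cmod (\<psi> z)) \<in> borel_measurable (dA \<alpha>)"
      by (simp add: measurable_cong_sets[OF sets_dA refl])
    show "AE z in dA \<alpha>. norm (indicator (ball 0 1) z * cmod (\<psi> z)) \<le> norm (1 + indicator (ball 0 1) z * (cmod (\<psi> z))^2)"
      using le_1_sq[of "cmod (\<psi> _)"] by (auto simp: indicator_def)
  qed
qed



lemma hbi4:
  fixes f1 f2 f3 f4 :: "'a \<Rightarrow> complex"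
  assumes "integrable M f1" "integrable M f2" "integrable M f3" "integrable M f4"
  shows "has_bochner_integral M (\<lambda>x. c1 * f1 x + c2 * f2 x + c3 * f3 x + c4 * f4 x)
     (c1 * integral\<^sup>L M f1 + c2 * integral\<^sup>L M f2 + c3 * integral\<^sup>L M f3 + c4 * integral\<^sup>L M f4)"
  using assms by (intro has_bochner_integral_add has_bochner_integral_mult_right has_bochner_integral_integrable)

theorem theorem5p2:
  fixes \<alpha> :: real and l :: complex and \<psi> :: "complex \<Rightarrow> complex" and m :: nat
  assumes "\<alpha> > -1"
    and "l \<noteq> 0" and "cmod l \<le> 1"
    and "\<psi> holomorphic_on ball 0 1" and "\<psi> 0 = 0"
    and "wcomp_bounded \<alpha> \<psi> (\<lambda>z. l * z)"
    and "m \<ge> 2"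
  shows "cball 0 ((1/2) * sqrt (fact m * Gamma (\<alpha> + 3) / Gamma (real m + \<alpha> + 2))
                   * cmod (l * taylor_coeff \<psi> (m - 1)))
         \<subseteq> numrange \<alpha> (wcomp \<psi> (\<lambda>z. l * z))"
proof (rule subsetI)
  fix v :: complex
  assume v: "v \<in> cball 0 ((1/2) * sqrt (fact m * Gamma (\<alpha> + 3) / Gamma (real m + \<alpha> + 2))
                   * cmod (l * taylor_coeff \<psi> (m - 1)))"
  have a: "\<alpha> > -1" by (rule assms(1))
  interpret finite_measure "dA \<alpha>" by (rule finite_dA[OF a])
  define c where "c = taylor_coeff \<psi>"
  have c0: "c 0 = 0" using assms(5) by (simp add: c_def taylor_coeff_def)
  have hi: "integrable (dA \<alpha>) (\<lambda>z. indicator (ball 0 1) z * cmod (\<psi> z))"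
    by (rule psi_L1[OF a assms(3) assms(4) assms(6)])
  define n1 where "n1 = sqrt (nu \<alpha> 1)"
  define nm where "nm = sqrt (nu \<alpha> m)"
  have n1p: "n1 > 0" unfolding n1_def using nu_pos[OF a] by simp
  have nmp: "nm > 0" unfolding nm_def using nu_pos[OF a] by simp
  have nu1: "nu \<alpha> 1 = n1^2" unfolding n1_def using nu_pos[OF a, of 1] by simp
  have num: "nu \<alpha> m = nm^2" unfolding nm_def using nu_pos[OF a, of m] by simp
  define e1 where "e1 = complex_of_real (1 / n1)"
  define em where "em = complex_of_real (1 / nm)"
  have ce1: "cnj e1 = e1" "cnj em = em" by (simp_all add: e1_def em_def)
  define K where "K = l * c (m - 1) * complex_of_real (nm / n1)"
  define P where "P a b z = a * e1 * z + b * em * z^m" for a b z :: complex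
  define F where "F a b z = indicator (ball 0 1) z * P a b z" for a b z :: complex
  define G where "G j k z = indicator (ball 0 1) z * (\<psi> z * z^j * cnj z^k)" for j k :: nat and z :: complex
  define H where "H j k z = indicator (ball 0 1) z * (z^j * cnj z^k)" for j k :: nat and z :: complex
  have Gi: "integrable (dA \<alpha>) (G j k)" for j k
    unfolding G_def by (rule h_integrable[OF a assms(4) hi])
  have Hi: "integrable (dA \<alpha>) (H j k)" for j k
    unfolding H_def by (rule ind_integrable[OF a])
  have GI: "integral\<^sup>L (dA \<alpha>) (G j k) = (if j \<le> k then c (k - j) * complex_of_real (nu \<alpha> k) else 0)" for j k
    unfolding G_def c_def by (rule coeff_integral[OF a assms(4) hi])
  have HI1: "integral\<^sup>L (dA \<alpha>) (H j j) = complex_of_real (nu \<alpha> j)" for j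
    unfolding H_def by (rule ind_norm[OF a])
  have HI2: "integral\<^sup>L (dA \<alpha>) (H j k) = 0" if "j \<noteq> k" for j k
    unfolding H_def by (rule ortho[OF that])
  have m1: "\<not> m \<le> 1" "1 \<le> m" using assms(7) by auto

  have E: "F a b z * cnj (F a b z) = (a * cnj a * e1 * e1) * H 1 1 z + (a * cnj b * e1 * em) * H 1 m z
      + (b * cnj a * em * e1) * H m 1 z + (b * cnj b * em * em) * H m m z" for a b z
  proof (cases "z \<in> ball 0 1")
    case True
    then show ?thesis unfolding F_def H_def P_def
      by (simp add: ce1 algebra_simps)
  qed (simp add: F_def H_def)
  have Ehb: "has_bochner_integral (dA \<alpha>) (\<lambda>z. F a b z * cnj (F a b z))
      (complex_of_real ((cmod a)^2 + (cmod b)^2))" for a b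
  proof -
    have "has_bochner_integral (dA \<alpha>) (\<lambda>z. (a * cnj a * e1 * e1) * H 1 1 z + (a * cnj b * e1 * em) * H 1 m z
      + (b * cnj a * em * e1) * H m 1 z + (b * cnj b * em * em) * H m m z)
      ((a * cnj a * e1 * e1) * integral\<^sup>L (dA \<alpha>) (H 1 1) + (a * cnj b * e1 * em) * integral\<^sup>L (dA \<alpha>) (H 1 m)
      + (b * cnj a * em * e1) * integral\<^sup>L (dA \<alpha>) (H m 1) + (b * cnj b * em * em) * integral\<^sup>L (dA \<alpha>) (H m m))"
      by (rule hbi4[OF Hi Hi Hi Hi])
    also have "((a * cnj a * e1 * e1) * integral\<^sup>L (dA \<alpha>) (H 1 1) + (a * cnj b * e1 * em) * integral\<^sup>L (dA \<alpha>) (H 1 m)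
      + (b * cnj a * em * e1) * integral\<^sup>L (dA \<alpha>) (H m 1) + (b * cnj b * em * em) * integral\<^sup>L (dA \<alpha>) (H m m))
      = a * cnj a * (e1 * e1 * complex_of_real (nu \<alpha> 1)) + b * cnj b * (em * em * complex_of_real (nu \<alpha> m))"
      using m1 by (simp add: HI1 HI2 algebra_simps)
    also have "e1 * e1 * complex_of_real (nu \<alpha> 1) = 1"
      unfolding e1_def nu1 using n1p by (simp add: field_simps power2_eq_square)
    also have "em * em * complex_of_real (nu \<alpha> m) = 1"
      unfolding em_def num using nmp by (simp add: field_simps power2_eq_square)
    also have "a * cnj a * 1 + b * cnj b * 1 = complex_of_real ((cmod a)^2 + (cmod b)^2)"
      by (simp only: mult_1_right of_real_add complex_norm_square)
    finally show ?thesis by (simp only: E)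
  qed
  have F1: "F a b \<in> bergman \<alpha>" for a b
  proof -
    have Peq: "P a b = (\<lambda>z. a * e1 * z + b * em * z^m)" by (rule ext) (simp add: P_def)
    have "P a b holomorphic_on ball 0 1" unfolding Peq by (intro holomorphic_intros)
    then have "F a b holomorphic_on ball 0 1"
      by (subst holomorphic_cong[of _ _ _ "P a b"]) (auto simp: F_def)
    moreover have "integrable (dA \<alpha>) (\<lambda>z. (cmod (F a b z))^2)"
    proof -
      have i: "integrable (dA \<alpha>) (\<lambda>z. F a b z * cnj (F a b z))"
        using Ehb[of a b] by (simp only: has_bochner_integral_iff)
      have "integrable (dA \<alpha>) (\<lambda>z. Re (F a b z * cnj (F a b z)))"
        using i by (rule integrable_Re)
      moreover have "Re (F a b z * cnj (F a b z)) = (cmod (F a b z))^2" for z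
        using complex_norm_square[of "F a b z"] by (metis Re_complex_of_real)
      ultimately show ?thesis by simp
    qed
    ultimately show ?thesis by (simp add: bergman_def)
  qed
  have F2: "bnorm \<alpha> (F a b) = sqrt ((cmod a)^2 + (cmod b)^2)" for a b
  proof -
    have "complex_of_real (\<integral>z. (cmod (F a b z))^2 \<partial>dA \<alpha>) = (\<integral>z. complex_of_real ((cmod (F a b z))^2) \<partial>dA \<alpha>)"
      by (rule integral_complex_of_real[symmetric])
    also have "\<dots> = (\<integral>z. F a b z * cnj (F a b z) \<partial>dA \<alpha>)"
      by (simp only: complex_norm_square)
    also have "\<dots> = complex_of_real ((cmod a)^2 + (cmod b)^2)"
      by (rule has_bochner_integral_integral_eq[OF Ehb])
    finally have "(\<integral>z. (cmod (F a b z))^2 \<partial>dA \<alpha>) = (cmod a)^2 + (cmod b)^2"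
      by (simp only: of_real_eq_iff)
    then show ?thesis by (simp add: bnorm_def)
  qed
  have F3: "binner \<alpha> (wcomp \<psi> (\<lambda>z. l * z) (F a b)) (F a b) = a * cnj b * K" for a b
  proof -
    have pt: "\<psi> z * F a b (l * z) * cnj (F a b z) =
        (a * l * e1 * cnj a * e1) * G 1 1 z + (a * l * e1 * cnj b * em) * G 1 m z
      + (b * l^m * em * cnj a * e1) * G m 1 z + (b * l^m * em * cnj b * em) * G m m z" for z
    proof (cases "z \<in> ball 0 1")
      case True
      have "cmod l * cmod z \<le> cmod z" using assms(3) by (intro mult_left_le_one_le) auto
      then have "l * z \<in> ball 0 1" using True by (simp add: norm_mult)
      then show ?thesis using True unfolding F_def G_def P_def
        by (simp add: ce1 power_mult_distrib algebra_simps)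
    qed (simp add: F_def G_def)
    have "binner \<alpha> (wcomp \<psi> (\<lambda>z. l * z) (F a b)) (F a b) =
      (\<integral>z. (a * l * e1 * cnj a * e1) * G 1 1 z + (a * l * e1 * cnj b * em) * G 1 m z
      + (b * l^m * em * cnj a * e1) * G m 1 z + (b * l^m * em * cnj b * em) * G m m z \<partial>dA \<alpha>)"
      unfolding binner_def wcomp_def by (simp only: pt)
    also have "\<dots> = (a * l * e1 * cnj a * e1) * integral\<^sup>L (dA \<alpha>) (G 1 1) + (a * l * e1 * cnj b * em) * integral\<^sup>L (dA \<alpha>) (G 1 m)
      + (b * l^m * em * cnj a * e1) * integral\<^sup>L (dA \<alpha>) (G m 1) + (b * l^m * em * cnj b * em) * integral\<^sup>L (dA \<alpha>) (G m m)"
      by (rule has_bochner_integral_integral_eq[OF hbi4[OF Gi Gi Gi Gi]])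
    also have "\<dots> = a * cnj b * (l * c (m - 1) * (e1 * em * complex_of_real (nu \<alpha> m)))"
      using m1 c0 by (simp add: GI algebra_simps)
    also have "e1 * em * complex_of_real (nu \<alpha> m) = complex_of_real (nm / n1)"
      unfolding e1_def em_def num using n1p nmp by (simp add: field_simps power2_eq_square)
    finally show ?thesis by (simp add: K_def mult_ac)
  qed
  have ratio: "fact m * Gamma (\<alpha> + 3) / Gamma (real m + \<alpha> + 2) = nu \<alpha> m / nu \<alpha> 1"
  proof -
    have g: "Gamma (\<alpha> + 2) > 0" "Gamma (\<alpha> + 3) > 0" "Gamma (real m + \<alpha> + 2) > 0"
      using a by (auto intro!: Gamma_real_pos)
    have e: "real 1 + \<alpha> + 2 = \<alpha> + 3" by simp
    show ?thesis unfolding nu_def e using g by (simp add: field_simps)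
  qed
  have RK: "(1/2) * sqrt (fact m * Gamma (\<alpha> + 3) / Gamma (real m + \<alpha> + 2)) * cmod (l * taylor_coeff \<psi> (m - 1))
      = cmod K / 2"
  proof -
    have "sqrt (nu \<alpha> m / nu \<alpha> 1) = nm / n1" unfolding nm_def n1_def by (rule real_sqrt_divide)
    then show ?thesis unfolding ratio K_def c_def using n1p nmp
      by (simp add: norm_mult norm_divide abs_of_pos mult_ac)
  qed
  have vK: "cmod v \<le> cmod K / 2" using v RK by simp
  obtain a b where ab: "(cmod a)^2 + (cmod b)^2 = 1" "a * cnj b * K = v"
  proof (cases "K = 0")
    case True
    then have "v = 0" using vK by simp
    then show ?thesis using True by (intro that[of 1 0]) auto
  next
    case False
    define u where "u = v / K"
    define t where "t = cmod u"
    have t: "0 \<le> t" "t \<le> 1/2" using vK False unfolding t_def u_def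
      by (auto simp: norm_divide field_simps)
    define s where "s = sqrt (1 - 4 * t^2)"
    have s: "0 \<le> s" "s^2 = 1 - 4 * t^2"
    proof -
      have "4 * t^2 \<le> 1"
      proof -
        have "t^2 \<le> (1/2)^2" using t by (intro power_mono) auto
        then show ?thesis by (simp add: power2_eq_square)
      qed
      then show "0 \<le> s" "s^2 = 1 - 4 * t^2" unfolding s_def by auto
    qed
    define A where "A = sqrt ((1 + s) / 2)"
    have A: "A > 0" "A^2 = (1 + s) / 2" unfolding A_def using s by auto
    define a where "a = complex_of_real A"
    define b where "b = cnj u / complex_of_real A"
    have "(cmod a)^2 + (cmod b)^2 = A^2 + t^2 / A^2"
      unfolding a_def b_def t_def using A by (simp add: norm_divide power_divide abs_of_pos)
    also have "\<dots> = 1"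
    proof -
      have h0: "A^2 * A^2 - A^2 + t^2 = 0"
        unfolding A using s by (simp add: field_simps power2_eq_square)
      have A2: "A^2 > 0" using A by simp
      have "A^2 + t^2/A^2 = (A^2 * A^2 + t^2)/A^2" using A2 by (simp add: field_simps)
      also have "A^2 * A^2 + t^2 = A^2" using h0 by linarith
      also have "A^2/A^2 = 1" using A2 by simp
      finally show ?thesis .
    qed
    finally have "(cmod a)^2 + (cmod b)^2 = 1" .
    moreover have "a * cnj b * K = v"
      unfolding a_def b_def u_def using A False by (simp add: field_simps)
    ultimately show ?thesis by (rule that)
  qed
  have "v = binner \<alpha> (wcomp \<psi> (\<lambda>z. l * z) (F a b)) (F a b)" using F3 ab by simp
  moreover have "F a b \<in> bergman \<alpha>" by (rule F1)
  moreover have "bnorm \<alpha> (F a b) = 1" using F2 ab by simp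
  ultimately show "v \<in> numrange \<alpha> (wcomp \<psi> (\<lambda>z. l * z))"
    unfolding numrange_def by blast
qed


end
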